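(* Let $a,b,m\in\mathbb N_0$ with $a+b\ge1$, let $\mathcal R(m,a,b)$ be the number of red balls in an $(a,b)$-Pólya urn after $m$ balls have been added, and let $\mu(m,a,b)=a\big(1+m/(a+b)\big)$. Then for every $t>0$, \[\mathbb P\big(|\mathcal R(m,a,b)-\mu(m,a,b)|\ge t\,\mu(m,a,b)\big)\le 2\exp\Big(-\frac{t^2a^2}{8(a+b)}\Big).\]
   Context: An $(a,b)$-Pólya urn starts with $a$ red and $b$ blue balls; at each step a ball is drawn uniformly at random and returned together with one additional ball of the same colour. *)

theory Defs
  imports "HOL-Probability.Probability"
begin

text \<open>At step m+1 the urn contains a+b+m balls, r of them red; a red
  ball is drawn with probability r/(a+b+m) and then one red ball is added.\<close>
fun polya_red :: "nat \<Rightarrow> nat \<Rightarrow> nat \<Rightarrow> nat pmf" where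
  "polya_red 0 a b = return_pmf a"
| "polya_red (Suc m) a b =
     bind_pmf (polya_red m a b)
       (\<lambda>r. map_pmf (\<lambda>c. if c then r + 1 else r)
              (bernoulli_pmf (real r / real (a + b + m))))"

definition polya_mu :: "nat \<Rightarrow> nat \<Rightarrow> nat \<Rightarrow> real" where
  "polya_mu m a b = real a * (1 + real m / real (a + b))"

end

theory Submission
  imports Defs
begin

lemma q1b: assumes "(x::real) > 0" shows "(r+1)/(x+1) = r/x + (1-r/x)/(x+1)"
  using assms by (simp add: divide_simps) (simp add: algebra_simps)
lemma q2b: assumes "(x::real) > 0" shows "r/(x+1) = r/x - (r/x)/(x+1)"
  using assms by (simp add: divide_simps) (simp add: algebra_simps)
lemma q3: assumes "(x::real) > 0" shows "1/(x+1)^2 \<le> 1/x - 1/(x+1)"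
proof -
  have "x+1 > 0" using assms by simp
  have e: "1/x - 1/(x+1) = 1/(x*(x+1))" using assms \<open>x+1>0\<close> by (simp add: field_simps)
  show ?thesis unfolding e power2_eq_square using assms
    by (intro divide_left_mono mult_right_mono mult_pos_pos) auto
qed

lemma polya_support: "set_pmf (polya_red m a b) \<subseteq> {..a+m}"
proof (induction m)
  case 0 then show ?case by simp
next
  case (Suc m) then show ?case by (fastforce simp: set_bind_pmf)
qed

lemma two_point_pos:
  fixes p h :: real assumes "0 \<le> p" "p \<le> 1" "h \<ge> 0"
  shows "p * exp ((1-p)*h) + (1-p) * exp (-p*h) \<le> exp (h\<^sup>2/8)"
proof -
  have pos: "1 + p * (exp h - 1) > 0" using assms by (simp add: add_pos_nonneg)
  have "p * exp ((1-p)*h) + (1-p) * exp (-p*h) = exp (-h*p) * (1 + p * (exp h - 1))"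
    by (simp add: algebra_simps flip: exp_add)
  also have "\<dots> = exp (-h*p) * exp (ln (1 + p * (exp h - 1)))"
    using pos by simp
  also have "\<dots> = exp (-h*p + ln (1 + p * (exp h - 1)))"
    by (simp only: exp_add)
  also have "\<dots> \<le> exp (h\<^sup>2/8)"
    using Hoeffdings_lemma_aux[of h p] assms by simp
  finally show ?thesis .
qed

lemma two_point:
  fixes p h :: real assumes "0 \<le> p" "p \<le> 1"
  shows "p * exp ((1-p)*h) + (1-p) * exp (-p*h) \<le> exp (h\<^sup>2/8)"
proof (cases "h \<ge> 0")
  case True then show ?thesis using two_point_pos assms by blast
next
  case False
  have "(1-p) * exp ((1-(1-p))*(-h)) + (1-(1-p)) * exp (-(1-p)*(-h)) \<le> exp ((-h)\<^sup>2/8)"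
    using False assms by (intro two_point_pos) auto
  then show ?thesis by (simp add: algebra_simps)
qed

lemma inner_bound:
  fixes N A0 l r :: real
  assumes N: "N > 0" and r: "0 \<le> r" "r \<le> N"
  shows "exp (l * ((r+1)/(N+1) - A0)) * (r/N) + exp (l * (r/(N+1) - A0)) * (1 - r/N)
     \<le> exp (l * (r/N - A0)) * exp ((l/(N+1))\<^sup>2/8)"
proof -
  define p where "p = r/N"
  define h where "h = l/(N+1)"
  have p: "0 \<le> p" "p \<le> 1" using N r by (auto simp: p_def field_simps)
  have q1: "(r+1)/(N+1) = r/N + (1-p)/(N+1)" unfolding p_def by (rule q1b[OF N])
  have q2: "r/(N+1) = r/N - p/(N+1)" unfolding p_def by (rule q2b[OF N])
  have e1: "l * ((r+1)/(N+1) - A0) = l * (r/N - A0) + (1-p)*h"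
    unfolding q1 h_def by (simp add: divide_inverse algebra_simps)
  have e2: "l * (r/(N+1) - A0) = l * (r/N - A0) + (-p*h)"
    unfolding q2 h_def by (simp add: divide_inverse algebra_simps)
  have "exp (l * ((r+1)/(N+1) - A0)) * (r/N) + exp (l * (r/(N+1) - A0)) * (1 - r/N)
     = exp (l * (r/N - A0)) * (p * exp ((1-p)*h) + (1-p) * exp (-p*h))"
    unfolding e1 e2 exp_add by (simp add: p_def algebra_simps)
  also have "\<dots> \<le> exp (l * (r/N - A0)) * exp (h\<^sup>2/8)"
    using two_point[OF p] by simp
  finally show ?thesis by (simp add: h_def)
qed

lemma polya_mgf:
  assumes "a + b \<ge> 1"
  shows "measure_pmf.expectation (polya_red m a b)
           (\<lambda>r. exp (l * (real r / real (a+b+m) - real a / real (a+b))))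
         \<le> exp (l\<^sup>2/8 * (1/real (a+b) - 1/real (a+b+m)))"
proof (induction m)
  case 0 then show ?case by simp
next
  case (Suc m)
  define N where "N = real (a+b+m)"
  define A0 where "A0 = real a / real (a+b)"
  define n where "n = real (a+b)"
  have N: "N > 0" using assms by (simp add: N_def)
  have n: "n > 0" "n \<le> N" using assms by (auto simp: n_def N_def)
  have NS: "real (a+b+Suc m) = N + 1" by (simp add: N_def)
  define f where "f = (\<lambda>r::nat. exp (l * (real r / N - A0)))"
  define C where "C = exp ((l/(N+1))\<^sup>2/8)"
  define F where "F = (\<lambda>r::nat. map_pmf (\<lambda>c. if c then r + 1 else r)
              (bernoulli_pmf (real r / real (a + b + m))))"
  let ?A = "{..a+m}"
  have fin: "finite ?A" by simp
  have sup: "set_pmf (polya_red m a b) \<subseteq> ?A" by (rule polya_support)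
  have "measure_pmf.expectation (polya_red (Suc m) a b)
           (\<lambda>r. exp (l * (real r / real (a+b+Suc m) - real a / real (a+b))))
      = measure_pmf.expectation (bind_pmf (polya_red m a b) F)
           (\<lambda>r. exp (l * (real r / (N+1) - A0)))"
    unfolding NS by (simp add: F_def A0_def)
  also have "\<dots> = (\<Sum>r\<in>?A. pmf (polya_red m a b) r *\<^sub>R
        measure_pmf.expectation (F r) (\<lambda>r. exp (l * (real r / (N+1) - A0))))"
    by (rule pmf_expectation_bind[OF fin _ sup]) (simp add: F_def)
  also have "\<dots> \<le> (\<Sum>r\<in>?A. f r * pmf (polya_red m a b) r * C)"
  proof (rule sum_mono)
    fix r assume rA: "r \<in> ?A"
    have rN: "real r \<le> N" using rA by (simp add: N_def)
    have pr: "0 \<le> real r / N" "real r / N \<le> 1" using rN N by auto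
    have "measure_pmf.expectation (F r) (\<lambda>r. exp (l * (real r / (N+1) - A0)))
       = exp (l * ((real r+1)/(N+1) - A0)) * (real r/N) + exp (l * (real r/(N+1) - A0)) * (1 - real r/N)"
      unfolding F_def N_def[symmetric] using pr by simp
    also have "\<dots> \<le> f r * C"
      unfolding f_def C_def by (rule inner_bound[OF N]) (use rN in auto)
    finally have "pmf (polya_red m a b) r * measure_pmf.expectation (F r) (\<lambda>r. exp (l * (real r / (N+1) - A0)))
        \<le> pmf (polya_red m a b) r * (f r * C)" by (rule mult_left_mono) simp
    then show "pmf (polya_red m a b) r *\<^sub>R
        measure_pmf.expectation (F r) (\<lambda>r. exp (l * (real r / (N+1) - A0)))
        \<le> f r * pmf (polya_red m a b) r * C"
      by (simp add: mult_ac)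
  qed
  also have "\<dots> = (\<Sum>r\<in>?A. f r * pmf (polya_red m a b) r) * C"
    by (simp add: sum_distrib_right)
  also have "(\<Sum>r\<in>?A. f r * pmf (polya_red m a b) r) = measure_pmf.expectation (polya_red m a b) f"
    by (rule integral_measure_pmf_real[symmetric]) (use sup in auto)
  also have "measure_pmf.expectation (polya_red m a b) f * C \<le> exp (l\<^sup>2/8 * (1/n - 1/N)) * C"
    using Suc unfolding f_def N_def A0_def n_def by (rule mult_right_mono) (simp add: C_def)
  also have "exp (l\<^sup>2/8 * (1/n - 1/N)) * C \<le> exp (l\<^sup>2/8 * (1/n - 1/(N+1)))"
  proof -
    have "1/(N+1)^2 \<le> 1/N - 1/(N+1)"
      by (rule q3[OF N])
    then have "l\<^sup>2/8 * (1/(N+1)^2) \<le> l\<^sup>2/8 * (1/N - 1/(N+1))"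
      by (intro mult_left_mono) auto
    then have "l\<^sup>2/8 * (1/n - 1/N) + (l/(N+1))\<^sup>2/8 \<le> l\<^sup>2/8 * (1/n - 1/(N+1))"
    proof -
      have d1: "(l/(N+1))\<^sup>2/8 = l\<^sup>2/8*(1/(N+1)^2)" by (simp add: power_divide)
      have d2: "l\<^sup>2/8*(1/n - 1/N) = l\<^sup>2/8*(1/n) - l\<^sup>2/8*(1/N)" by (simp add: right_diff_distrib)
      have d3: "l\<^sup>2/8*(1/n - 1/(N+1)) = l\<^sup>2/8*(1/n) - l\<^sup>2/8*(1/(N+1))" by (simp add: right_diff_distrib)
      have d4: "l\<^sup>2/8*(1/N - 1/(N+1)) = l\<^sup>2/8*(1/N) - l\<^sup>2/8*(1/(N+1))" by (simp add: right_diff_distrib)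
      show ?thesis using \<open>l\<^sup>2/8 * (1/(N+1)^2) \<le> l\<^sup>2/8 * (1/N - 1/(N+1))\<close>
        unfolding d1 d2 d3 d4 by linarith
    qed
    then show ?thesis unfolding C_def by (simp flip: exp_add)
  qed
  finally show ?case unfolding NS n_def by simp
qed

lemma chernoff_pmf:
  fixes Z :: "'a \<Rightarrow> real"
  assumes "finite (set_pmf M)"
  shows "measure_pmf.prob M {x. c \<le> Z x} \<le> measure_pmf.expectation M (\<lambda>x. exp (Z x)) * exp (-c)"
proof -
  have "measure_pmf.prob M {x. c \<le> Z x} = measure_pmf.expectation M (indicator {x. c \<le> Z x})"
    by simp
  also have "\<dots> \<le> measure_pmf.expectation M (\<lambda>x. exp (Z x) * exp (-c))"
  proof (rule integral_mono)
    show "integrable (measure_pmf M) (indicator {x. c \<le> Z x} :: 'a \<Rightarrow> real)"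
      using assms by (rule integrable_measure_pmf_finite)
    show "integrable (measure_pmf M) (\<lambda>x. exp (Z x) * exp (-c))"
      using assms by (rule integrable_measure_pmf_finite)
    fix x
    show "indicator {x. c \<le> Z x} x \<le> exp (Z x) * exp (-c)"
    proof (cases "c \<le> Z x")
      case True
      have "1 \<le> exp (Z x - c)" using True by simp
      then show ?thesis using True by (simp add: exp_diff divide_simps exp_minus)
    next
      case False then show ?thesis by simp
    qed
  qed
  also have "\<dots> = measure_pmf.expectation M (\<lambda>x. exp (Z x)) * exp (-c)"
    by simp
  finally show ?thesis .
qed

theorem lemma4p8:
  fixes a b m :: nat and t :: real
  assumes "a + b \<ge> 1" and "t > 0"
  shows "measure_pmf.prob (polya_red m a b)
           {r. \<bar>real r - polya_mu m a b\<bar> \<ge> t * polya_mu m a b}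
         \<le> 2 * exp (- (t\<^sup>2 * (real a)\<^sup>2 / (8 * real (a + b))))"
proof (cases "a = 0")
  case True
  have "measure_pmf.prob (polya_red m a b)
           {r. \<bar>real r - polya_mu m a b\<bar> \<ge> t * polya_mu m a b} \<le> 1" by simp
  also have "1 \<le> 2 * exp (- (t\<^sup>2 * (real a)\<^sup>2 / (8 * real (a + b))))" using True by simp
  finally show ?thesis .
next
  case False
  define n where "n = real (a+b)"
  define N where "N = real (a+b+m)"
  define A0 where "A0 = real a / real (a+b)"
  define s where "s = t * real a / n"
  define l where "l = 4 * s * n"
  have n: "n > 0" "n \<le> N" using assms by (auto simp: n_def N_def)
  have s: "s > 0" using False assms n by (simp add: s_def)
  have mu: "polya_mu m a b = N * A0"
    unfolding polya_mu_def N_def A0_def using n by (simp add: n_def field_simps)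
  have fin: "finite (set_pmf (polya_red m a b))"
    by (rule finite_subset[OF polya_support]) simp
  define Z1 where "Z1 = (\<lambda>r::nat. l * (real r / real (a+b+m) - real a / real (a+b)))"
  define Z2 where "Z2 = (\<lambda>r::nat. (-l) * (real r / real (a+b+m) - real a / real (a+b)))"
  have sub: "{r. \<bar>real r - polya_mu m a b\<bar> \<ge> t * polya_mu m a b} \<subseteq> {r. (l * s) \<le> Z1 r} \<union> {r. (l * s) \<le> Z2 r}"
  proof
    fix r assume "r \<in> {r. \<bar>real r - polya_mu m a b\<bar> \<ge> t * polya_mu m a b}"
    then have h: "\<bar>real r - N * A0\<bar> \<ge> t * (N * A0)" by (simp add: mu)
    have e: "real r - N * A0 = N * (real r / N - A0)" using n by (simp add: field_simps)
    have e2: "t * (N * A0) = N * s" by (simp add: s_def A0_def n_def)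
    have "N * \<bar>real r / N - A0\<bar> \<ge> N * s" using h unfolding e e2 using n by (simp add: abs_mult)
    then have "\<bar>real r / N - A0\<bar> \<ge> s" using n by simp
    then have "real r / N - A0 \<ge> s \<or> -(real r / N - A0) \<ge> s" by linarith
    moreover have "l \<ge> 0" using s n by (simp add: l_def)
    ultimately have "l * s \<le> l * (real r / N - A0) \<or> l * s \<le> l * (-(real r / N - A0))"
      by (auto intro: mult_left_mono)
    moreover have z1: "Z1 r = l * (real r / N - A0)" by (simp add: Z1_def N_def A0_def)
    moreover have z2: "Z2 r = l * (-(real r / N - A0))" by (simp add: Z2_def N_def A0_def algebra_simps)
    ultimately show "r \<in> {r. (l * s) \<le> Z1 r} \<union> {r. (l * s) \<le> Z2 r}"
      by auto
  qed
  have bnd: "exp (x\<^sup>2/8 * (1/n - 1/N)) * exp (-(l * s)) \<le> exp (- (t\<^sup>2 * (real a)\<^sup>2 / (8 * real (a + b))))"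
    if "x\<^sup>2 = l\<^sup>2" for x
  proof -
    have "x\<^sup>2/8 * (1/n - 1/N) \<le> x\<^sup>2/8 * (1/n)"
      using n by (intro mult_left_mono) auto
    also have "\<dots> = 2 * s\<^sup>2 * n" using that n by (simp add: l_def power2_eq_square field_simps)
    finally have "x\<^sup>2/8 * (1/n - 1/N) - l * s \<le> - 2 * s\<^sup>2 * n"
      by (simp add: l_def power2_eq_square algebra_simps)
    also have "- 2 * s\<^sup>2 * n \<le> - (t\<^sup>2 * (real a)\<^sup>2 / (8 * real (a + b)))"
    proof -
      define Q where "Q = t\<^sup>2 * (real a)\<^sup>2 / n"
      define W where "W = t\<^sup>2 * (real a)\<^sup>2 / (8 * real (a + b))"
      have q: "s\<^sup>2 * n = Q" using n unfolding Q_def by (simp add: s_def power2_eq_square field_simps)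
      have q0: "Q \<ge> 0" using n unfolding Q_def by simp
      have w: "W = Q / 8" unfolding W_def Q_def by (simp add: n_def)
      have eqv: "- 2 * s\<^sup>2 * n = -2 * (s\<^sup>2 * n)" by simp
      show ?thesis unfolding eqv W_def[symmetric] q using q0 w by linarith
    qed
    finally show ?thesis by (simp flip: exp_add)
  qed
  have "measure_pmf.prob (polya_red m a b)
           {r. \<bar>real r - polya_mu m a b\<bar> \<ge> t * polya_mu m a b}
        \<le> measure_pmf.prob (polya_red m a b) ({r. (l * s) \<le> Z1 r} \<union> {r. (l * s) \<le> Z2 r})"
    by (rule measure_pmf.finite_measure_mono[OF sub]) simp
  also have "\<dots> \<le> measure_pmf.prob (polya_red m a b) {r. (l * s) \<le> Z1 r} + measure_pmf.prob (polya_red m a b) {r. (l * s) \<le> Z2 r}"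
    by (rule measure_Un_le) simp_all
  also have "measure_pmf.prob (polya_red m a b) {r. (l * s) \<le> Z1 r} \<le> exp (- (t\<^sup>2 * (real a)\<^sup>2 / (8 * real (a + b))))"
  proof -
    have "measure_pmf.prob (polya_red m a b) {r. (l * s) \<le> Z1 r} \<le> measure_pmf.expectation (polya_red m a b) (\<lambda>x. exp (Z1 x)) * exp (-(l * s))"
      by (rule chernoff_pmf[OF fin])
    also have "\<dots> \<le> exp (l\<^sup>2/8 * (1/n - 1/N)) * exp (-(l * s))"
      unfolding Z1_def n_def N_def by (intro mult_right_mono polya_mgf assms) simp
    also have "\<dots> \<le> exp (- (t\<^sup>2 * (real a)\<^sup>2 / (8 * real (a + b))))" by (rule bnd) simp
    finally show ?thesis .
  qed
  also have "measure_pmf.prob (polya_red m a b) {r. (l * s) \<le> Z2 r} \<le> exp (- (t\<^sup>2 * (real a)\<^sup>2 / (8 * real (a + b))))"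
  proof -
    have "measure_pmf.prob (polya_red m a b) {r. (l * s) \<le> Z2 r} \<le> measure_pmf.expectation (polya_red m a b) (\<lambda>x. exp (Z2 x)) * exp (-(l * s))"
      by (rule chernoff_pmf[OF fin])
    also have "\<dots> \<le> exp ((-l)\<^sup>2/8 * (1/n - 1/N)) * exp (-(l * s))"
      unfolding Z2_def n_def N_def by (intro mult_right_mono polya_mgf assms) simp
    also have "\<dots> \<le> exp (- (t\<^sup>2 * (real a)\<^sup>2 / (8 * real (a + b))))" by (rule bnd) simp
    finally show ?thesis .
  qed
  finally show ?thesis by simp
qed

end
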